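(* For any planar graph $G$, if $\mathcal{B}=\{N[v]\mid v\in V(G)\}$, then NCTD$(\mathcal{B})\le 5$.
   Context: $N[v]$ is the closed neighborhood of $v$. A teaching map for $\mathcal{B}$ assigns to each $B\in\mathcal{B}$ a set $T(B)\subseteq V(G)$ (examples labeled by membership in $B$). A vertex $w$ distinguishes $B,B'$ if $w$ lies in exactly one of them. $T$ is non-clashing if for all distinct $B,B'\in\mathcal{B}$ some $w\in T(B)\cup T(B')$ distinguishes them; its size is $\max_{B\in\mathcal{B}}|T(B)|$. NCTD$(\mathcal{B})$ is the minimum size of a non-clashing teaching map for $\mathcal{B}$. *)

theory Defs
  imports "HOL-Analysis.Analysis"
begin

definition simple_graph :: "'a set \<Rightarrow> 'a set set \<Rightarrow> bool" where
  "simple_graph V E \<longleftrightarrow> finite V \<and>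
     (\<forall>e\<in>E. \<exists>u v. e = {u, v} \<and> u \<noteq> v \<and> u \<in> V \<and> v \<in> V)"

definition planar_graph :: "'a set \<Rightarrow> 'a set set \<Rightarrow> bool" where
  "planar_graph V E \<longleftrightarrow> simple_graph V E \<and>
     (\<exists>(p :: 'a \<Rightarrow> complex) (\<gamma> :: 'a set \<Rightarrow> real \<Rightarrow> complex).
        inj_on p V \<and>
        (\<forall>e\<in>E. arc (\<gamma> e) \<and> {pathstart (\<gamma> e), pathfinish (\<gamma> e)} = p ` e \<and>
                 path_image (\<gamma> e) \<inter> p ` V = p ` e) \<and>
        (\<forall>e\<in>E. \<forall>e'\<in>E. e \<noteq> e' \<longrightarrow>
                 path_image (\<gamma> e) \<inter> path_image (\<gamma> e') \<subseteq> p ` (e \<inter> e')))"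

definition closed_nbhd :: "'a set \<Rightarrow> 'a set set \<Rightarrow> 'a \<Rightarrow> 'a set" where
  "closed_nbhd V E v = insert v {u \<in> V. {u, v} \<in> E}"

definition teaching_map :: "'a set \<Rightarrow> 'a set set \<Rightarrow> ('a set \<Rightarrow> 'a set) \<Rightarrow> bool" where
  "teaching_map V \<B> T \<longleftrightarrow> (\<forall>B\<in>\<B>. T B \<subseteq> V)"

definition distinguishes :: "'a \<Rightarrow> 'a set \<Rightarrow> 'a set \<Rightarrow> bool" where
  "distinguishes w B B' \<longleftrightarrow> (w \<in> B) \<noteq> (w \<in> B')"

definition non_clashing :: "'a set set \<Rightarrow> ('a set \<Rightarrow> 'a set) \<Rightarrow> bool" where
  "non_clashing \<B> T \<longleftrightarrow>
     (\<forall>B\<in>\<B>. \<forall>B'\<in>\<B>. B \<noteq> B' \<longrightarrow> (\<exists>w \<in> T B \<union> T B'. distinguishes w B B'))"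

text \<open>NCTD: minimum size (max over B of |T(B)|) of a non-clashing teaching map.
  Size at most k is expressed as: every T(B) is finite with at most k elements.\<close>
definition NCTD :: "'a set \<Rightarrow> 'a set set \<Rightarrow> nat" where
  "NCTD V \<B> = (LEAST k. \<exists>T. teaching_map V \<B> T \<and> non_clashing \<B> T \<and>
                              (\<forall>B\<in>\<B>. finite (T B) \<and> card (T B) \<le> k))"

end

theory Submission
  imports Defs
begin


lemma arc_interior:
  fixes g :: "real \<Rightarrow> 'a::real_normed_vector"
  assumes "arc g"
  shows "connected (path_image g - {pathstart g, pathfinish g})"
    and "path_image g \<subseteq> closure (path_image g - {pathstart g, pathfinish g})"
proof -
  have inj: "inj_on g {0..1}" and pg: "path g" using assms by (auto simp: arc_def)
  have eq: "path_image g - {pathstart g, pathfinish g} = g ` {0<..<1}"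
  proof
    show "path_image g - {pathstart g, pathfinish g} \<subseteq> g ` {0<..<1}"
    proof
      fix y assume "y \<in> path_image g - {pathstart g, pathfinish g}"
      then obtain t where t: "0 \<le> t" "t \<le> 1" "y = g t" "g t \<noteq> g 0" "g t \<noteq> g 1"
        by (auto simp: path_image_def pathstart_def pathfinish_def)
      then have "t \<noteq> 0" "t \<noteq> 1" by auto
      with t show "y \<in> g ` {0<..<1}" by auto
    qed
    show "g ` {0<..<1} \<subseteq> path_image g - {pathstart g, pathfinish g}"
    proof
      fix y assume "y \<in> g ` {0<..<1}"
      then obtain t where t: "0 < t" "t < 1" "y = g t" by auto
      have "g t \<noteq> g 0" using inj t by (metis atLeastAtMost_iff inj_onD less_eq_real_def order.refl zero_le_one less_irrefl)
      moreover have "g t \<noteq> g 1" using inj t by (metis atLeastAtMost_iff inj_onD less_eq_real_def order.refl zero_le_one less_irrefl)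
      ultimately show "y \<in> path_image g - {pathstart g, pathfinish g}"
        using t by (auto simp: path_image_def pathstart_def pathfinish_def)
    qed
  qed
  have cont: "continuous_on {0..1} g" using pg by (simp add: path_def)
  show "connected (path_image g - {pathstart g, pathfinish g})"
    unfolding eq
    by (rule connected_continuous_image) (auto intro: continuous_on_subset[OF cont])
  have "g ` closure {0<..<1} \<subseteq> closure (g ` {0<..<1})"
    by (rule image_closure_subset) (auto simp: cont closure_subset[THEN subsetD])
  then show "path_image g \<subseteq> closure (path_image g - {pathstart g, pathfinish g})"
    unfolding eq by (simp add: path_image_def)
qed

lemma absorb_inside:
  assumes "connected T" "T \<inter> S = {}" "q \<in> T" "q \<in> inside S"
  shows "T \<subseteq> inside S"
proof
  fix t assume t: "t \<in> T"
  have "connected_component (- S) q t"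
    unfolding connected_component_def using assms t by blast
  then have "connected_component_set (- S) t = connected_component_set (- S) q"
    by (metis connected_component_eq mem_Collect_eq)
  then show "t \<in> inside S" using assms t by (auto simp: inside_def)
qed

lemma absorb_outside:
  assumes "connected T" "T \<inter> S = {}" "q \<in> T" "q \<in> outside S"
  shows "T \<subseteq> outside S"
proof
  fix t assume t: "t \<in> T"
  have "connected_component (- S) q t"
    unfolding connected_component_def using assms t by blast
  then have "connected_component_set (- S) t = connected_component_set (- S) q"
    by (metis connected_component_eq mem_Collect_eq)
  then show "t \<in> outside S" using assms t by (auto simp: outside_def)
qed

lemma loop_props:
  fixes A B :: "real \<Rightarrow> complex"
  assumes "arc A" "arc B" "pathstart A = x" "pathfinish A = y" "pathstart B = x" "pathfinish B = y"
    "path_image A \<inter> path_image B = {x,y}"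
  shows "inside (path_image A \<union> path_image B) \<noteq> {}"
    "open (inside (path_image A \<union> path_image B))"
    "connected (inside (path_image A \<union> path_image B))"
    "connected (outside (path_image A \<union> path_image B))"
    "frontier (inside (path_image A \<union> path_image B)) = path_image A \<union> path_image B"
proof -
  have sp: "simple_path (A +++ reversepath B)"
    using assms by (subst simple_path_join_loop_eq) (auto simp: arc_reversepath)
  have lp: "pathfinish (A +++ reversepath B) = pathstart (A +++ reversepath B)"
    using assms by simp
  have pi: "path_image (A +++ reversepath B) = path_image A \<union> path_image B"
    using assms by (simp add: path_image_join)
  note J = Jordan_inside_outside[OF sp lp, unfolded pi]
  show "inside (path_image A \<union> path_image B) \<noteq> {}"
    "open (inside (path_image A \<union> path_image B))"
    "connected (inside (path_image A \<union> path_image B))"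
    "connected (outside (path_image A \<union> path_image B))"
    "frontier (inside (path_image A \<union> path_image B)) = path_image A \<union> path_image B"
    using J by auto
qed

lemma cross_in:
  fixes A B e :: "real \<Rightarrow> complex"
  assumes arcs: "arc A" "arc B" "arc e"
    and ends: "pathstart A = x" "pathfinish A = y" "pathstart B = x" "pathfinish B = y"
      "pathstart e = x" "pathfinish e = y" and xy: "x \<noteq> y"
    and AB: "path_image A \<inter> path_image B = {x,y}"
    and AE: "path_image A \<inter> path_image e = {x,y}"
    and BE: "path_image B \<inter> path_image e = {x,y}"
    and p: "p \<in> path_image A - {x,y}" and q: "q \<in> path_image B - {x,y}"
    and Fo: "connected Fo" "p \<in> closure Fo" "q \<in> closure Fo"
      "Fo \<inter> (path_image A \<union> path_image B \<union> path_image e) = {}"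
    and Ein: "path_image e - {x,y} \<subseteq> inside (path_image A \<union> path_image B)"
    and Fin: "Fo \<subseteq> inside (path_image A \<union> path_image B)"
  shows False
proof -
  let ?A = "path_image A" and ?B = "path_image B" and ?E = "path_image e"
  have Ene: "path_image e - {x,y} \<noteq> {}"
  proof
    assume h: "path_image e - {x,y} = {}"
    have "path_image e \<subseteq> {}" using arc_interior(2)[OF arcs(3)] ends h by (metis closure_empty)
    then show False using pathstart_in_path_image[of e] by blast
  qed
  have ne: "?E \<inter> inside (?A \<union> ?B) \<noteq> {}" using Ene Ein by blast
  obtain D: "inside (?A \<union> ?E) \<inter> inside (?B \<union> ?E) = {}"
     "inside (?A \<union> ?E) \<union> inside (?B \<union> ?E) \<union> (?E - {x,y}) = inside (?A \<union> ?B)"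
    by (rule split_inside_simple_closed_curve[of A x y B e])
       (use arcs ends xy AB AE BE ne in \<open>auto simp: arc_imp_simple_path Int_commute\<close>)
  have o1: "open (inside (?A \<union> ?E))" and o2: "open (inside (?B \<union> ?E))"
    using arcs by (auto intro!: open_inside closed_Un closed_path_image arc_imp_path)
  have sub: "Fo \<subseteq> inside (?A \<union> ?E) \<union> inside (?B \<union> ?E)"
    using Fin Fo(4) D(2) by blast
  have "Fo \<inter> inside (?A \<union> ?E) = {} \<or> Fo \<inter> inside (?B \<union> ?E) = {}"
    using Fo(1) o1 o2 sub D(1) unfolding connected_def by blast
  moreover have cl1: "closure (inside (?A \<union> ?E)) \<subseteq> (?A \<union> ?E) \<union> inside (?A \<union> ?E)"
    using arcs by (intro closure_inside_subset closed_Un closed_path_image arc_imp_path)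
  moreover have cl2: "closure (inside (?B \<union> ?E)) \<subseteq> (?B \<union> ?E) \<union> inside (?B \<union> ?E)"
    using arcs by (intro closure_inside_subset closed_Un closed_path_image arc_imp_path)
  moreover have "inside (?A \<union> ?B) \<inter> (?A \<union> ?B) = {}" by simp
  ultimately show False
  proof (elim disjE)
    assume "Fo \<inter> inside (?A \<union> ?E) = {}"
    then have "Fo \<subseteq> inside (?B \<union> ?E)" using sub by blast
    then have "p \<in> closure (inside (?B \<union> ?E))" using Fo(2) closure_mono by blast
    then show False using cl2 p AB AE BE D(2) inside_no_overlap[of "?A \<union> ?B"] by blast
  next
    assume "Fo \<inter> inside (?B \<union> ?E) = {}"
    then have "Fo \<subseteq> inside (?A \<union> ?E)" using sub by blast
    then have "q \<in> closure (inside (?A \<union> ?E))" using Fo(3) closure_mono by blast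
    then show False using cl1 q AB AE BE D(2) inside_no_overlap[of "?A \<union> ?B"] by blast
  qed
qed

lemma cross_out_z:
  fixes A B e :: "real \<Rightarrow> complex"
  assumes arcs: "arc A" "arc B" "arc e"
    and ends: "pathstart A = x" "pathfinish A = y" "pathstart B = x" "pathfinish B = y"
      "pathstart e = x" "pathfinish e = y" and xy: "x \<noteq> y"
    and AB: "path_image A \<inter> path_image B = {x,y}"
    and AE: "path_image A \<inter> path_image e = {x,y}"
    and BE: "path_image B \<inter> path_image e = {x,y}"
    and p: "p \<in> path_image A - {x,y}" and q: "q \<in> path_image B - {x,y}"
    and Fo: "connected Fo" "p \<in> closure Fo" "q \<in> closure Fo"
      "Fo \<inter> (path_image A \<union> path_image B \<union> path_image e) = {}"
    and Eout: "path_image e - {x,y} \<subseteq> outside (path_image A \<union> path_image B)"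
    and Fout: "Fo \<subseteq> outside (path_image A \<union> path_image B)"
    and z: "z \<in> inside (path_image A \<union> path_image B)" "z \<in> inside (path_image A \<union> path_image e)"
  shows False
proof -
  let ?A = "path_image A" and ?B = "path_image B" and ?E = "path_image e"
  note LAB = loop_props[OF arcs(1,2) ends(1-4) AB]
  have xyA: "x \<in> ?A" "y \<in> ?A" using ends pathstart_in_path_image pathfinish_in_path_image by metis+
  have EI: "?E \<inter> inside (?A \<union> ?B) = {}"
  proof -
    have "(?E - {x,y}) \<inter> inside (?A \<union> ?B) = {}" using Eout inside_Int_outside by blast
    moreover have "{x,y} \<inter> inside (?A \<union> ?B) = {}" using xyA inside_no_overlap[of "?A \<union> ?B"] by blast
    ultimately show ?thesis by blast
  qed
  have qcl: "q \<in> closure (inside (?A \<union> ?B))"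
    using LAB(5) q frontier_def by (metis DiffD1 UnI2 Diff_subset subsetD)
  have c1: "connected (insert q (inside (?A \<union> ?B)))"
    by (rule connected_intermediate_closure[OF LAB(3)]) (use qcl closure_subset in auto)
  have d1: "insert q (inside (?A \<union> ?B)) \<inter> (?A \<union> ?E) = {}"
    using EI q AB BE inside_no_overlap[of "?A \<union> ?B"] by blast
  have "insert q (inside (?A \<union> ?B)) \<subseteq> inside (?A \<union> ?E)"
    by (rule absorb_inside[OF c1 d1 _ z(2)]) (use z(1) in auto)
  then have qin: "q \<in> inside (?A \<union> ?E)" by blast
  have c2: "connected (insert q Fo)"
    by (rule connected_intermediate_closure[OF Fo(1)]) (use Fo(3) closure_subset in auto)
  have d2: "insert q Fo \<inter> (?A \<union> ?E) = {}"
    using Fo(4) q AB BE by blast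
  have FoI: "Fo \<subseteq> inside (?A \<union> ?E)"
    using absorb_inside[OF c2 d2 _ qin] by blast
  have ne: "?B \<inter> inside (?A \<union> ?E) \<noteq> {}" using q qin by blast
  obtain D: "inside (?A \<union> ?B) \<inter> inside (?E \<union> ?B) = {}"
     "inside (?A \<union> ?B) \<union> inside (?E \<union> ?B) \<union> (?B - {x,y}) = inside (?A \<union> ?E)"
    by (rule split_inside_simple_closed_curve[of A x y e B])
       (use arcs ends xy AB AE BE ne in \<open>auto simp: arc_imp_simple_path Int_commute\<close>)
  have "Fo \<subseteq> inside (?E \<union> ?B)"
    using FoI D(2) Fo(4) Fout inside_Int_outside[of "?A \<union> ?B"] by blast
  then have "p \<in> closure (inside (?E \<union> ?B))" using Fo(2) closure_mono by blast
  moreover have "closure (inside (?E \<union> ?B)) \<subseteq> (?E \<union> ?B) \<union> inside (?E \<union> ?B)"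
    using arcs by (intro closure_inside_subset closed_Un closed_path_image arc_imp_path)
  ultimately show False
    using p AB AE D(2) inside_no_overlap[of "?A \<union> ?E"] by blast
qed

lemma cross:
  fixes A B e :: "real \<Rightarrow> complex"
  assumes arcs: "arc A" "arc B" "arc e"
    and ends: "pathstart A = x" "pathfinish A = y" "pathstart B = x" "pathfinish B = y"
      "pathstart e = x" "pathfinish e = y" and xy: "x \<noteq> y"
    and AB: "path_image A \<inter> path_image B = {x,y}"
    and AE: "path_image A \<inter> path_image e = {x,y}"
    and BE: "path_image B \<inter> path_image e = {x,y}"
    and p: "p \<in> path_image A - {x,y}" and q: "q \<in> path_image B - {x,y}"
    and Fo: "connected Fo" "p \<in> closure Fo" "q \<in> closure Fo"
      "Fo \<inter> (path_image A \<union> path_image B \<union> path_image e) = {}"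
    and same: "(path_image e - {x,y} \<subseteq> inside (path_image A \<union> path_image B) \<and>
                Fo \<subseteq> inside (path_image A \<union> path_image B)) \<or>
               (path_image e - {x,y} \<subseteq> outside (path_image A \<union> path_image B) \<and>
                Fo \<subseteq> outside (path_image A \<union> path_image B))"
  shows False
  using same
proof (elim disjE conjE)
  assume "path_image e - {x,y} \<subseteq> inside (path_image A \<union> path_image B)"
    "Fo \<subseteq> inside (path_image A \<union> path_image B)"
  then show False by (rule cross_in[OF assms(1-19)])
next
  let ?A = "path_image A" and ?B = "path_image B" and ?E = "path_image e"
  assume Eout: "?E - {x,y} \<subseteq> outside (?A \<union> ?B)" and Fout: "Fo \<subseteq> outside (?A \<union> ?B)"
  note LAB = loop_props[OF arcs(1,2) ends(1-4) AB]
  obtain z where z: "z \<in> inside (?A \<union> ?B)" using LAB(1) by blast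
  have xyA: "x \<in> ?A" "y \<in> ?A" using ends pathstart_in_path_image pathfinish_in_path_image by metis+
  have zE: "z \<notin> ?E" using z Eout xyA inside_Int_outside[of "?A \<union> ?B"] inside_no_overlap[of "?A \<union> ?B"] by blast
  have zAB: "z \<notin> ?A" "z \<notin> ?B" using z inside_no_overlap[of "?A \<union> ?B"] by blast+
  have "z \<in> inside (?A \<union> ?E) \<or> z \<in> inside (?B \<union> ?E)"
  proof (rule ccontr)
    assume "\<not> ?thesis"
    then have zo: "z \<in> outside (?A \<union> ?E)" "z \<in> outside (?B \<union> ?E)"
      using zE zAB inside_Un_outside by blast+
    have bnd: "bounded (?A \<union> ?B \<union> ?E)"
      using arcs by (auto intro!: bounded_path_image arc_imp_path)
    obtain w where w: "w \<in> outside (?A \<union> ?B \<union> ?E)"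
      using outside_bounded_nonempty[OF bnd] by blast
    have w1: "w \<in> outside (?A \<union> ?E)" and w2: "w \<in> outside (?B \<union> ?E)"
      and w3: "w \<in> outside (?A \<union> ?B)"
      using w outside_mono[of "?A \<union> ?E" "?A \<union> ?B \<union> ?E"] outside_mono[of "?B \<union> ?E" "?A \<union> ?B \<union> ?E"]
        outside_mono[of "?A \<union> ?B" "?A \<union> ?B \<union> ?E"] by blast+
    have LAE: "connected (outside (?A \<union> ?E))"
      using loop_props(4)[OF arcs(1,3) ends(1,2,5,6) AE] .
    have LBE: "connected (outside (?B \<union> ?E))"
      using loop_props(4)[OF arcs(2,3) ends(3-6) BE] .
    have cc1: "connected_component (- (?A \<union> ?E)) z w"
      unfolding connected_component_def
      using LAE zo(1) w1 outside_no_overlap[of "?A \<union> ?E"] by blast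
    have cc2: "connected_component (- (?B \<union> ?E)) z w"
      unfolding connected_component_def
      using LBE zo(2) w2 outside_no_overlap[of "?B \<union> ?E"] by blast
    have xyE: "x \<in> ?E" "y \<in> ?E" using ends pathstart_in_path_image pathfinish_in_path_image by metis+
    have int: "(?A \<union> ?E) \<inter> (?B \<union> ?E) = ?E" using AB xyE by (simp add: Int_Un_distrib Int_Un_distrib2 Int_absorb1 Un_absorb1 insert_subset) (metis Un_absorb Un_insert_right Un_left_commute insert_absorb sup_bot.right_neutral)
    have "connected_component (- ((?A \<union> ?E) \<union> (?B \<union> ?E))) z w"
      by (rule Janiszewski[OF _ _ _ cc1 cc2])
         (use arcs int in \<open>auto intro!: compact_Un compact_path_image closed_Un closed_path_image arc_imp_path connected_path_image\<close>)
    then have "connected_component (- (?A \<union> ?B)) z w"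
      by (rule connected_component_of_subset) auto
    then obtain T where T: "connected T" "T \<subseteq> - (?A \<union> ?B)" "z \<in> T" "w \<in> T"
      unfolding connected_component_def by blast
    have "T \<subseteq> outside (?A \<union> ?B)"
      by (rule absorb_outside[OF T(1) _ T(4) w3]) (use T(2) in auto)
    then show False using z T(3) inside_Int_outside[of "?A \<union> ?B"] by blast
  qed
  then show False
  proof
    assume "z \<in> inside (?A \<union> ?E)"
    then show False by (rule cross_out_z[OF assms(1-19) Eout Fout z])
  next
    assume zB: "z \<in> inside (?B \<union> ?E)"
    show False
      by (rule cross_out_z[of B A e x y q p Fo z])
         (use assms Eout Fout z zB in \<open>auto simp: Un_commute Int_commute Un_left_commute\<close>)
  qed
qed



definition K33 :: "(nat \<Rightarrow> complex) \<Rightarrow> (nat \<Rightarrow> complex) \<Rightarrow> (nat \<Rightarrow> nat \<Rightarrow> real \<Rightarrow> complex) \<Rightarrow> bool" where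
  "K33 a b g \<longleftrightarrow>
    (\<forall>i<3. \<forall>j<3. arc (g i j) \<and> pathstart (g i j) = a i \<and> pathfinish (g i j) = b j) \<and>
    (\<forall>i<3. \<forall>k<3. a i = a k \<longrightarrow> i = k) \<and> (\<forall>i<3. \<forall>k<3. b i = b k \<longrightarrow> i = k) \<and>
    (\<forall>i<3. \<forall>j<3. a i \<noteq> b j) \<and>
    (\<forall>i<3. \<forall>j<3. \<forall>k<3. \<forall>l<3. (i,j) \<noteq> (k,l) \<longrightarrow>
        path_image (g i j) \<inter> path_image (g k l) \<subseteq> (if i = k then {a i} else {}) \<union> (if j = l then {b j} else {}))"

definition intr :: "(real \<Rightarrow> complex) \<Rightarrow> complex set" where
  "intr h = path_image h - {pathstart h, pathfinish h}"

definition Jcyc :: "(nat \<Rightarrow> nat \<Rightarrow> real \<Rightarrow> complex) \<Rightarrow> complex set" where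
  "Jcyc g = path_image (g 0 0) \<union> path_image (g 1 0) \<union> path_image (g 1 1) \<union>
            path_image (g 2 1) \<union> path_image (g 2 2) \<union> path_image (g 0 2)"

lemma K33_pair:
  assumes K: "K33 a b g"
    and same: "(intr (g 0 1) \<subseteq> inside (Jcyc g) \<and> intr (g 1 2) \<subseteq> inside (Jcyc g)) \<or>
               (intr (g 0 1) \<subseteq> outside (Jcyc g) \<and> intr (g 1 2) \<subseteq> outside (Jcyc g))"
  shows False
proof -
  note Kd = K[unfolded K33_def]
  have H1: "\<forall>i<3. \<forall>j<3. arc (g i j) \<and> pathstart (g i j) = a i \<and> pathfinish (g i j) = b j"
    using Kd[THEN conjunct1] .
  have H2a: "\<forall>i<3. \<forall>k<3. a i = a k \<longrightarrow> i = k" using Kd[THEN conjunct2, THEN conjunct1] .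
  have H2b: "\<forall>i<3. \<forall>k<3. b i = b k \<longrightarrow> i = k" using Kd[THEN conjunct2, THEN conjunct2, THEN conjunct1] .
  have H2c: "\<forall>i<3. \<forall>j<3. a i \<noteq> b j" using Kd[THEN conjunct2, THEN conjunct2, THEN conjunct2, THEN conjunct1] .
  have H3: "\<forall>i<3. \<forall>j<3. \<forall>k<3. \<forall>l<3. (i,j) \<noteq> (k,l) \<longrightarrow>
        path_image (g i j) \<inter> path_image (g k l) \<subseteq> (if i = k then {a i} else {}) \<union> (if j = l then {b j} else {})"
    using Kd[THEN conjunct2, THEN conjunct2, THEN conjunct2, THEN conjunct2] .
  have i0001: "path_image (g 0 0) \<inter> path_image (g 0 1) \<subseteq> {a 0}" using H3[rule_format, of 0 0 0 1] by simp
  have i0002: "path_image (g 0 0) \<inter> path_image (g 0 2) \<subseteq> {a 0}" using H3[rule_format, of 0 0 0 2] by simp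
  have i0010: "path_image (g 0 0) \<inter> path_image (g 1 0) \<subseteq> {b 0}" using H3[rule_format, of 0 0 1 0] by simp
  have i0011: "path_image (g 0 0) \<inter> path_image (g 1 1) \<subseteq> {}" using H3[rule_format, of 0 0 1 1] by simp
  have i0012: "path_image (g 0 0) \<inter> path_image (g 1 2) \<subseteq> {}" using H3[rule_format, of 0 0 1 2] by simp
  have i0020: "path_image (g 0 0) \<inter> path_image (g 2 0) \<subseteq> {b 0}" using H3[rule_format, of 0 0 2 0] by simp
  have i0021: "path_image (g 0 0) \<inter> path_image (g 2 1) \<subseteq> {}" using H3[rule_format, of 0 0 2 1] by simp
  have i0022: "path_image (g 0 0) \<inter> path_image (g 2 2) \<subseteq> {}" using H3[rule_format, of 0 0 2 2] by simp
  have i0102: "path_image (g 0 1) \<inter> path_image (g 0 2) \<subseteq> {a 0}" using H3[rule_format, of 0 1 0 2] by simp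
  have i0110: "path_image (g 0 1) \<inter> path_image (g 1 0) \<subseteq> {}" using H3[rule_format, of 0 1 1 0] by simp
  have i0111: "path_image (g 0 1) \<inter> path_image (g 1 1) \<subseteq> {b 1}" using H3[rule_format, of 0 1 1 1] by simp
  have i0112: "path_image (g 0 1) \<inter> path_image (g 1 2) \<subseteq> {}" using H3[rule_format, of 0 1 1 2] by simp
  have i0120: "path_image (g 0 1) \<inter> path_image (g 2 0) \<subseteq> {}" using H3[rule_format, of 0 1 2 0] by simp
  have i0121: "path_image (g 0 1) \<inter> path_image (g 2 1) \<subseteq> {b 1}" using H3[rule_format, of 0 1 2 1] by simp
  have i0122: "path_image (g 0 1) \<inter> path_image (g 2 2) \<subseteq> {}" using H3[rule_format, of 0 1 2 2] by simp
  have i0210: "path_image (g 0 2) \<inter> path_image (g 1 0) \<subseteq> {}" using H3[rule_format, of 0 2 1 0] by simp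
  have i0211: "path_image (g 0 2) \<inter> path_image (g 1 1) \<subseteq> {}" using H3[rule_format, of 0 2 1 1] by simp
  have i0212: "path_image (g 0 2) \<inter> path_image (g 1 2) \<subseteq> {b 2}" using H3[rule_format, of 0 2 1 2] by simp
  have i0220: "path_image (g 0 2) \<inter> path_image (g 2 0) \<subseteq> {}" using H3[rule_format, of 0 2 2 0] by simp
  have i0221: "path_image (g 0 2) \<inter> path_image (g 2 1) \<subseteq> {}" using H3[rule_format, of 0 2 2 1] by simp
  have i0222: "path_image (g 0 2) \<inter> path_image (g 2 2) \<subseteq> {b 2}" using H3[rule_format, of 0 2 2 2] by simp
  have i1011: "path_image (g 1 0) \<inter> path_image (g 1 1) \<subseteq> {a 1}" using H3[rule_format, of 1 0 1 1] by simp
  have i1012: "path_image (g 1 0) \<inter> path_image (g 1 2) \<subseteq> {a 1}" using H3[rule_format, of 1 0 1 2] by simp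
  have i1020: "path_image (g 1 0) \<inter> path_image (g 2 0) \<subseteq> {b 0}" using H3[rule_format, of 1 0 2 0] by simp
  have i1021: "path_image (g 1 0) \<inter> path_image (g 2 1) \<subseteq> {}" using H3[rule_format, of 1 0 2 1] by simp
  have i1022: "path_image (g 1 0) \<inter> path_image (g 2 2) \<subseteq> {}" using H3[rule_format, of 1 0 2 2] by simp
  have i1112: "path_image (g 1 1) \<inter> path_image (g 1 2) \<subseteq> {a 1}" using H3[rule_format, of 1 1 1 2] by simp
  have i1120: "path_image (g 1 1) \<inter> path_image (g 2 0) \<subseteq> {}" using H3[rule_format, of 1 1 2 0] by simp
  have i1121: "path_image (g 1 1) \<inter> path_image (g 2 1) \<subseteq> {b 1}" using H3[rule_format, of 1 1 2 1] by simp
  have i1122: "path_image (g 1 1) \<inter> path_image (g 2 2) \<subseteq> {}" using H3[rule_format, of 1 1 2 2] by simp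
  have i1220: "path_image (g 1 2) \<inter> path_image (g 2 0) \<subseteq> {}" using H3[rule_format, of 1 2 2 0] by simp
  have i1221: "path_image (g 1 2) \<inter> path_image (g 2 1) \<subseteq> {}" using H3[rule_format, of 1 2 2 1] by simp
  have i1222: "path_image (g 1 2) \<inter> path_image (g 2 2) \<subseteq> {b 2}" using H3[rule_format, of 1 2 2 2] by simp
  have i2021: "path_image (g 2 0) \<inter> path_image (g 2 1) \<subseteq> {a 2}" using H3[rule_format, of 2 0 2 1] by simp
  have i2022: "path_image (g 2 0) \<inter> path_image (g 2 2) \<subseteq> {a 2}" using H3[rule_format, of 2 0 2 2] by simp
  have i2122: "path_image (g 2 1) \<inter> path_image (g 2 2) \<subseteq> {a 2}" using H3[rule_format, of 2 1 2 2] by simp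
  have ar: "arc (g i j)" "pathstart (g i j) = a i" "pathfinish (g i j) = b j" if "i < 3" "j < 3" for i j
    using H1 that by auto
  have ne: "a 0 \<noteq> a 1" "b 1 \<noteq> b 2" "a 0 \<noteq> b 1" "a 1 \<noteq> b 1" "a 0 \<noteq> b 2" "a 1 \<noteq> b 2"
    using H2a[rule_format, of 0 1] H2b[rule_format, of 1 2] H2c by auto
  have inim: "a i \<in> path_image (g i j)" "b j \<in> path_image (g i j)" if "i < 3" "j < 3" for i j
    using ar[OF that] pathstart_in_path_image pathfinish_in_path_image by metis+
  define A where "A = g 0 0 +++ reversepath (g 1 0) +++ g 1 1"
  define B where "B = g 0 2 +++ reversepath (g 2 2) +++ g 2 1"
  have arcA1: "arc (reversepath (g 1 0) +++ g 1 1)"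
    by (rule arc_join) (use ar i1011 in \<open>auto simp: arc_reversepath\<close>)
  have arcA: "arc A" unfolding A_def
    by (rule arc_join[OF _ arcA1]) (use ar i0010 i0011 in \<open>auto simp: path_image_join\<close>)
  have arcB1: "arc (reversepath (g 2 2) +++ g 2 1)"
    by (rule arc_join) (use ar i2122 in \<open>auto simp: arc_reversepath\<close>)
  have arcB: "arc B" unfolding B_def
    by (rule arc_join[OF _ arcB1]) (use ar i0222 i0221 in \<open>auto simp: path_image_join\<close>)
  have imA: "path_image A = path_image (g 0 0) \<union> path_image (g 1 0) \<union> path_image (g 1 1)"
    unfolding A_def using ar by (auto simp: path_image_join)
  have imB: "path_image B = path_image (g 0 2) \<union> path_image (g 2 2) \<union> path_image (g 2 1)"
    unfolding B_def using ar by (auto simp: path_image_join)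
  have endsA: "pathstart A = a 0" "pathfinish A = b 1" unfolding A_def using ar by auto
  have endsB: "pathstart B = a 0" "pathfinish B = b 1" unfolding B_def using ar by auto
  have AB: "path_image A \<inter> path_image B = {a 0, b 1}"
  proof
    show "path_image A \<inter> path_image B \<subseteq> {a 0, b 1}"
      unfolding imA imB using i0002 i0022 i0021 i0210 i1022 i1021 i0211 i1122 i1121 by blast
    show "{a 0, b 1} \<subseteq> path_image A \<inter> path_image B"
      unfolding imA imB using inim[of 0 0] inim[of 0 2] inim[of 1 1] inim[of 2 1] by auto
  qed
  have AE: "path_image A \<inter> path_image (g 0 1) = {a 0, b 1}"
  proof
    show "path_image A \<inter> path_image (g 0 1) \<subseteq> {a 0, b 1}"
      unfolding imA using i0001 i0110 i0111 by blast
    show "{a 0, b 1} \<subseteq> path_image A \<inter> path_image (g 0 1)"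
      unfolding imA using inim[of 0 0] inim[of 0 1] inim[of 1 1] by auto
  qed
  have BE: "path_image B \<inter> path_image (g 0 1) = {a 0, b 1}"
  proof
    show "path_image B \<inter> path_image (g 0 1) \<subseteq> {a 0, b 1}"
      unfolding imB using i0102 i0122 i0121 by blast
    show "{a 0, b 1} \<subseteq> path_image B \<inter> path_image (g 0 1)"
      unfolding imB using inim[of 0 2] inim[of 0 1] inim[of 2 1] by auto
  qed
  have p: "a 1 \<in> path_image A - {a 0, b 1}" unfolding imA using inim[of 1 0] ne by auto
  have q: "b 2 \<in> path_image B - {a 0, b 1}" unfolding imB using inim[of 0 2] ne by auto
  have Fo: "connected (intr (g 1 2))" "a 1 \<in> closure (intr (g 1 2))" "b 2 \<in> closure (intr (g 1 2))"
    using arc_interior[OF ar(1)[of 1 2]] ar[of 1 2] inim[of 1 2] unfolding intr_def by auto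
  have Fo4: "intr (g 1 2) \<inter> (path_image A \<union> path_image B \<union> path_image (g 0 1)) = {}"
    unfolding imA imB intr_def using ar[of 1 2] i0012 i1012 i1112 i0212 i1222 i1221 i0112 by auto
  have J: "Jcyc g = path_image A \<union> path_image B" unfolding Jcyc_def imA imB by auto
  show False
    by (rule cross[OF arcA arcB ar(1)[of 0 1] endsA endsB ar(2,3)[of 0 1] ne(3) AB AE BE p q Fo Fo4])
       (use same ar[of 0 1] in \<open>simp_all add: J intr_def\<close>)
qed

lemma K33_rot:
  assumes K: "K33 a b g"
  shows "K33 (\<lambda>i. a ((i+1) mod 3)) (\<lambda>j. b ((j+1) mod 3)) (\<lambda>i j. g ((i+1) mod 3) ((j+1) mod 3))"
proof -
  note Kd = K[unfolded K33_def]
  have H1: "\<forall>i<3. \<forall>j<3. arc (g i j) \<and> pathstart (g i j) = a i \<and> pathfinish (g i j) = b j"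
    using Kd[THEN conjunct1] .
  have H2a: "\<forall>i<3. \<forall>k<3. a i = a k \<longrightarrow> i = k" using Kd[THEN conjunct2, THEN conjunct1] .
  have H2b: "\<forall>i<3. \<forall>k<3. b i = b k \<longrightarrow> i = k" using Kd[THEN conjunct2, THEN conjunct2, THEN conjunct1] .
  have H2c: "\<forall>i<3. \<forall>j<3. a i \<noteq> b j" using Kd[THEN conjunct2, THEN conjunct2, THEN conjunct2, THEN conjunct1] .
  have H3: "\<forall>i<3. \<forall>j<3. \<forall>k<3. \<forall>l<3. (i,j) \<noteq> (k,l) \<longrightarrow>
        path_image (g i j) \<inter> path_image (g k l) \<subseteq> (if i = k then {a i} else {}) \<union> (if j = l then {b j} else {})"
    using Kd[THEN conjunct2, THEN conjunct2, THEN conjunct2, THEN conjunct2] .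
  have m: "(i+1) mod 3 < (3::nat)" for i by simp
  have e: "((i+1) mod 3 = (k+1) mod 3) = (i = k)" if "i < 3" "k < (3::nat)" for i k
  proof -
    have c3: "n < 3 \<Longrightarrow> n = 0 \<or> n = 1 \<or> n = (2::nat)" for n by arith
    show ?thesis using c3[OF that(1)] c3[OF that(2)] by (elim disjE) simp_all
  qed
  have R1: "\<forall>i<3. \<forall>j<3. arc (g ((i+1) mod 3) ((j+1) mod 3)) \<and> pathstart (g ((i+1) mod 3) ((j+1) mod 3)) = a ((i+1) mod 3)
       \<and> pathfinish (g ((i+1) mod 3) ((j+1) mod 3)) = b ((j+1) mod 3)"
    using H1 m by blast
  have R2: "\<forall>i<3. \<forall>k<3. a ((i+1) mod 3) = a ((k+1) mod 3) \<longrightarrow> i = k"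
  proof (intro allI impI)
    fix i k assume "i < (3::nat)" "k < (3::nat)" "a ((i+1) mod 3) = a ((k+1) mod 3)"
    then show "i = k" using H2a[rule_format, OF m m] e by blast
  qed
  have R3: "\<forall>i<3. \<forall>k<3. b ((i+1) mod 3) = b ((k+1) mod 3) \<longrightarrow> i = k"
  proof (intro allI impI)
    fix i k assume "i < (3::nat)" "k < (3::nat)" "b ((i+1) mod 3) = b ((k+1) mod 3)"
    then show "i = k" using H2b[rule_format, OF m m] e by blast
  qed
  have R4: "\<forall>i<3. \<forall>j<3. a ((i+1) mod 3) \<noteq> b ((j+1) mod 3)"
    using H2c m by blast
  have R5: "\<forall>i<3. \<forall>j<3. \<forall>k<3. \<forall>l<3. (i,j) \<noteq> (k,l) \<longrightarrow>
        path_image (g ((i+1) mod 3) ((j+1) mod 3)) \<inter> path_image (g ((k+1) mod 3) ((l+1) mod 3))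
       \<subseteq> (if i = k then {a ((i+1) mod 3)} else {}) \<union> (if j = l then {b ((j+1) mod 3)} else {})"
  proof (intro allI impI)
    fix i j k l assume ijkl: "i < (3::nat)" "j < (3::nat)" "k < (3::nat)" "l < (3::nat)" "(i,j) \<noteq> (k,l)"
    then have ne: "((i+1) mod 3, (j+1) mod 3) \<noteq> ((k+1) mod 3, (l+1) mod 3)" using e by auto
    have "path_image (g ((i+1) mod 3) ((j+1) mod 3)) \<inter> path_image (g ((k+1) mod 3) ((l+1) mod 3))
       \<subseteq> (if (i+1) mod 3 = (k+1) mod 3 then {a ((i+1) mod 3)} else {}) \<union>
          (if (j+1) mod 3 = (l+1) mod 3 then {b ((j+1) mod 3)} else {})"
      using H3[rule_format, OF m m m m ne] .
    then show "path_image (g ((i+1) mod 3) ((j+1) mod 3)) \<inter> path_image (g ((k+1) mod 3) ((l+1) mod 3))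
       \<subseteq> (if i = k then {a ((i+1) mod 3)} else {}) \<union> (if j = l then {b ((j+1) mod 3)} else {})"
      using e[of i k] e[of j l] ijkl by simp
  qed
  show ?thesis
    unfolding K33_def by (rule conjI[OF R1 conjI[OF R2 conjI[OF R3 conjI[OF R4 R5]]]])
qed

lemma side:
  assumes "connected T" "T \<inter> S = {}" "T \<noteq> {}"
  shows "T \<subseteq> inside S \<or> T \<subseteq> outside S"
proof -
  obtain t where t: "t \<in> T" using assms by blast
  have "t \<notin> S" using t assms(2) by blast
  then have "t \<in> inside S \<or> t \<in> outside S" using inside_Un_outside[of S] by (metis Compl_iff UnE)
  then show ?thesis using absorb_inside[OF assms(1,2) t] absorb_outside[OF assms(1,2) t] by blast
qed

lemma chord01_side:
  assumes K: "K33 a b g"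
  shows "intr (g 0 1) \<subseteq> inside (Jcyc g) \<or> intr (g 0 1) \<subseteq> outside (Jcyc g)"
proof -
  note Kd = K[unfolded K33_def]
  have H1: "\<forall>i<3. \<forall>j<3. arc (g i j) \<and> pathstart (g i j) = a i \<and> pathfinish (g i j) = b j"
    using Kd[THEN conjunct1] .
  have H3: "\<forall>i<3. \<forall>j<3. \<forall>k<3. \<forall>l<3. (i,j) \<noteq> (k,l) \<longrightarrow>
        path_image (g i j) \<inter> path_image (g k l) \<subseteq> (if i = k then {a i} else {}) \<union> (if j = l then {b j} else {})"
    using Kd[THEN conjunct2, THEN conjunct2, THEN conjunct2, THEN conjunct2] .
  have i1: "path_image (g 0 1) \<inter> path_image (g 0 0) \<subseteq> {a 0}" using H3[rule_format, of 0 1 0 0] by simp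
  have i2: "path_image (g 0 1) \<inter> path_image (g 1 0) \<subseteq> {}" using H3[rule_format, of 0 1 1 0] by simp
  have i3: "path_image (g 0 1) \<inter> path_image (g 1 1) \<subseteq> {b 1}" using H3[rule_format, of 0 1 1 1] by simp
  have i4: "path_image (g 0 1) \<inter> path_image (g 2 1) \<subseteq> {b 1}" using H3[rule_format, of 0 1 2 1] by simp
  have i5: "path_image (g 0 1) \<inter> path_image (g 2 2) \<subseteq> {}" using H3[rule_format, of 0 1 2 2] by simp
  have i6: "path_image (g 0 1) \<inter> path_image (g 0 2) \<subseteq> {a 0}" using H3[rule_format, of 0 1 0 2] by simp
  have ar: "arc (g 0 1)" "pathstart (g 0 1) = a 0" "pathfinish (g 0 1) = b 1" using H1 by auto
  have d0: "path_image (g 0 1) \<inter> Jcyc g \<subseteq> {a 0, b 1}"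
    unfolding Jcyc_def Int_Un_distrib using i1 i2 i3 i4 i5 i6 by blast
  have d: "intr (g 0 1) \<inter> Jcyc g = {}"
    unfolding intr_def using ar d0 by auto
  have ne: "intr (g 0 1) \<noteq> {}"
  proof
    assume h: "intr (g 0 1) = {}"
    have "path_image (g 0 1) \<subseteq> {}" using arc_interior(2)[OF ar(1)] h unfolding intr_def by (metis closure_empty)
    then show False using pathstart_in_path_image[of "g 0 1"] by blast
  qed
  show ?thesis
    by (rule side[OF _ d ne]) (use arc_interior(1)[OF ar(1)] in \<open>simp add: intr_def\<close>)
qed

lemma K33_false:
  assumes K: "K33 a b g"
  shows False
proof -
  define a1 where "a1 = (\<lambda>i. a ((i+1) mod 3))"
  define b1 where "b1 = (\<lambda>j. b ((j+1) mod 3))"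
  define g1 where "g1 = (\<lambda>i j. g ((i+1) mod 3) ((j+1) mod (3::nat)))"
  have K1: "K33 a1 b1 g1" unfolding a1_def b1_def g1_def by (rule K33_rot[OF K])
  define a2 where "a2 = (\<lambda>i. a1 ((i+1) mod 3))"
  define b2 where "b2 = (\<lambda>j. b1 ((j+1) mod 3))"
  define g2 where "g2 = (\<lambda>i j. g1 ((i+1) mod 3) ((j+1) mod (3::nat)))"
  have K2: "K33 a2 b2 g2" unfolding a2_def b2_def g2_def by (rule K33_rot[OF K1])
  have m: "(0+1) mod 3 = (1::nat)" "(1+1) mod 3 = (2::nat)" "(2+1) mod 3 = (0::nat)" by simp_all
  have J1: "Jcyc g1 = Jcyc g" unfolding Jcyc_def g1_def m by blast
  have J2: "Jcyc g2 = Jcyc g" unfolding Jcyc_def g2_def g1_def m by blast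
  have c1: "g1 0 1 = g 1 2" "g1 1 2 = g 2 0" unfolding g1_def m by simp_all
  have c2: "g2 0 1 = g 2 0" "g2 1 2 = g 0 1" unfolding g2_def g1_def m by simp_all
  have s0: "intr (g 0 1) \<subseteq> inside (Jcyc g) \<or> intr (g 0 1) \<subseteq> outside (Jcyc g)"
    by (rule chord01_side[OF K])
  have s1: "intr (g 1 2) \<subseteq> inside (Jcyc g) \<or> intr (g 1 2) \<subseteq> outside (Jcyc g)"
    using chord01_side[OF K1] unfolding J1 c1 .
  have s2: "intr (g 2 0) \<subseteq> inside (Jcyc g) \<or> intr (g 2 0) \<subseteq> outside (Jcyc g)"
    using chord01_side[OF K2] unfolding J2 c2 .
  have p0: "\<not> ((intr (g 0 1) \<subseteq> inside (Jcyc g) \<and> intr (g 1 2) \<subseteq> inside (Jcyc g)) \<or>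
               (intr (g 0 1) \<subseteq> outside (Jcyc g) \<and> intr (g 1 2) \<subseteq> outside (Jcyc g)))"
    using K33_pair[OF K] by blast
  have p1: "\<not> ((intr (g 1 2) \<subseteq> inside (Jcyc g) \<and> intr (g 2 0) \<subseteq> inside (Jcyc g)) \<or>
               (intr (g 1 2) \<subseteq> outside (Jcyc g) \<and> intr (g 2 0) \<subseteq> outside (Jcyc g)))"
    using K33_pair[OF K1] unfolding J1 c1 by blast
  have p2: "\<not> ((intr (g 2 0) \<subseteq> inside (Jcyc g) \<and> intr (g 0 1) \<subseteq> inside (Jcyc g)) \<or>
               (intr (g 2 0) \<subseteq> outside (Jcyc g) \<and> intr (g 0 1) \<subseteq> outside (Jcyc g)))"
    using K33_pair[OF K2] unfolding J2 c2 by blast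
  show False using s0 s1 s2 p0 p1 p2 by blast
qed



lemma card_le2_of_no3:
  assumes "finite X" "\<And>x y z. x \<in> X \<Longrightarrow> y \<in> X \<Longrightarrow> z \<in> X \<Longrightarrow> x \<noteq> y \<Longrightarrow> x \<noteq> z \<Longrightarrow> y \<noteq> z \<Longrightarrow> False"
  shows "card X \<le> 2"
proof (cases "X = {}")
  case True then show ?thesis by simp
next
  case False
  then obtain x where x: "x \<in> X" by blast
  show ?thesis
  proof (cases "X - {x} = {}")
    case True
    then have "X \<subseteq> {x}" by blast
    then have "card X \<le> card {x}" by (rule card_mono[rotated]) simp
    then show ?thesis by simp
  next
    case False
    then obtain y where y: "y \<in> X" "y \<noteq> x" by blast
    have "X \<subseteq> {x, y}" using assms(2) x y by blast
    then have "card X \<le> card {x, y}" by (rule card_mono[rotated]) simp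
    also have "\<dots> \<le> 2" by (simp add: card_insert_le_m1)
    finally show ?thesis .
  qed
qed

lemma edgeD:
  assumes "simple_graph V E" "{u, v} \<in> E"
  shows "u \<noteq> v" "u \<in> V" "v \<in> V"
proof -
  obtain x y where "{u, v} = {x, y}" "x \<noteq> y" "x \<in> V" "y \<in> V"
    using assms unfolding simple_graph_def by blast
  then show "u \<noteq> v" "u \<in> V" "v \<in> V" by (auto simp: doubleton_eq_iff)
qed

lemma nbhd_iff: "w \<in> closed_nbhd V E u \<longleftrightarrow> w = u \<or> (w \<in> V \<and> {w, u} \<in> E)"
  by (auto simp: closed_nbhd_def)

lemma local_S:
  assumes sg: "simple_graph V E"
    and NK: "\<And>x0 x1 x2 y0 y1 y2. distinct [x0,x1,x2,y0,y1,y2] \<Longrightarrow>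
       {x0,y0} \<in> E \<Longrightarrow> {x0,y1} \<in> E \<Longrightarrow> {x0,y2} \<in> E \<Longrightarrow>
       {x1,y0} \<in> E \<Longrightarrow> {x1,y1} \<in> E \<Longrightarrow> {x1,y2} \<in> E \<Longrightarrow>
       {x2,y0} \<in> E \<Longrightarrow> {x2,y1} \<in> E \<Longrightarrow> {x2,y2} \<in> E \<Longrightarrow> False"
    and v: "v \<in> V"
  shows "\<exists>S. S \<subseteq> V \<and> (\<forall>w\<in>S. {w,v} \<in> E) \<and> finite S \<and> card S \<le> 4 \<and>
             (\<forall>u\<in>V. {u,v} \<in> E \<longrightarrow> S \<subseteq> closed_nbhd V E u \<longrightarrow> closed_nbhd V E v \<subseteq> closed_nbhd V E u)"
proof (cases "\<forall>a\<in>V. \<forall>b\<in>V. {a,v} \<in> E \<longrightarrow> {b,v} \<in> E \<longrightarrow> a \<noteq> b \<longrightarrow> {a,b} \<in> E")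
  case True
  show ?thesis
  proof (intro exI[of _ "{}"] conjI ballI impI)
    fix u assume u: "u \<in> V" "{u,v} \<in> E"
    show "closed_nbhd V E v \<subseteq> closed_nbhd V E u"
    proof
      fix w assume "w \<in> closed_nbhd V E v"
      then have "w = v \<or> (w \<in> V \<and> {w,v} \<in> E)" by (simp add: nbhd_iff)
      then show "w \<in> closed_nbhd V E u"
      proof
        assume "w = v" then show ?thesis using u v by (simp add: nbhd_iff insert_commute)
      next
        assume w: "w \<in> V \<and> {w,v} \<in> E"
        show ?thesis
        proof (cases "w = u")
          case False
          then show ?thesis using True w u by (simp add: nbhd_iff)
        qed (simp add: nbhd_iff)
      qed
    qed
  qed auto
next
  case False
  then obtain a b where ab: "a \<in> V" "b \<in> V" "{a,v} \<in> E" "{b,v} \<in> E" "a \<noteq> b" "{a,b} \<notin> E" by blast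
  have fin: "finite V" using sg by (simp add: simple_graph_def)
  let ?N = "closed_nbhd V E"
  define C where "C = {u\<in>V. {u,v} \<in> E \<and> a \<in> ?N u \<and> b \<in> ?N u \<and> \<not> ?N v \<subseteq> ?N u}"
  have Cfin: "finite C" using fin by (simp add: C_def)
  have Cprops: "u \<noteq> a" "u \<noteq> b" "u \<noteq> v" "{a,u} \<in> E" "{b,u} \<in> E" "{v,u} \<in> E" if "u \<in> C" for u
  proof -
    have u: "u \<in> V" "{u,v} \<in> E" "a \<in> ?N u" "b \<in> ?N u" using that by (auto simp: C_def)
    show "u \<noteq> a"
    proof
      assume "u = a"
      then have "b = a \<or> {b,a} \<in> E" using u(4) by (auto simp: nbhd_iff)
      then show False using ab by (auto simp: insert_commute)
    qed
    show "u \<noteq> b"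
    proof
      assume "u = b"
      then have "a = b \<or> {a,b} \<in> E" using u(3) by (auto simp: nbhd_iff)
      then show False using ab by (auto simp: insert_commute)
    qed
    show "u \<noteq> v" using edgeD(1)[OF sg u(2)] .
    show "{a,u} \<in> E" using u(3) \<open>u \<noteq> a\<close> by (auto simp: nbhd_iff)
    show "{b,u} \<in> E" using u(4) \<open>u \<noteq> b\<close> by (auto simp: nbhd_iff)
    show "{v,u} \<in> E" using u(2) by (simp add: insert_commute)
  qed
  have va: "v \<noteq> a" "v \<noteq> b" using edgeD(1)[OF sg ab(3)] edgeD(1)[OF sg ab(4)] by auto
  have Ccard: "card C \<le> 2"
  proof (rule card_le2_of_no3[OF Cfin])
    fix x y z assume xyz: "x \<in> C" "y \<in> C" "z \<in> C" "x \<noteq> y" "x \<noteq> z" "y \<noteq> z"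
    show False
      by (rule NK[of v a b x y z]) (use xyz Cprops[OF xyz(1)] Cprops[OF xyz(2)] Cprops[OF xyz(3)] va ab(5) in auto)
  qed
  define m where "m u = (SOME w. w \<in> ?N v \<and> w \<notin> ?N u)" for u
  have mprop: "m u \<in> ?N v" "m u \<notin> ?N u" if "u \<in> C" for u
  proof -
    have "\<exists>w. w \<in> ?N v \<and> w \<notin> ?N u" using that by (auto simp: C_def)
    then have "m u \<in> ?N v \<and> m u \<notin> ?N u" unfolding m_def by (rule someI_ex)
    then show "m u \<in> ?N v" "m u \<notin> ?N u" by auto
  qed
  have mV: "m u \<in> V" "{m u, v} \<in> E" if "u \<in> C" for u
  proof -
    have u: "u \<in> V" "{u,v} \<in> E" using that by (auto simp: C_def)
    have "v \<in> ?N u" using u v by (simp add: nbhd_iff insert_commute)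
    then have "m u \<noteq> v" using mprop(2)[OF that] by auto
    then show "m u \<in> V" "{m u, v} \<in> E" using mprop(1)[OF that] by (auto simp: nbhd_iff)
  qed
  define S where "S = {a,b} \<union> m ` C"
  show ?thesis
  proof (intro exI[of _ S] conjI ballI impI)
    show "S \<subseteq> V" using ab mV by (auto simp: S_def)
    show "{w,v} \<in> E" if "w \<in> S" for w using that ab mV by (auto simp: S_def)
    show "finite S" using Cfin by (simp add: S_def)
    have "card S \<le> card {a,b} + card (m ` C)" unfolding S_def by (rule card_Un_le)
    also have "\<dots> \<le> 2 + 2"
    proof -
      have "card {a,b} \<le> 2" by (simp add: card_insert_le_m1)
      then show ?thesis using card_image_le[OF Cfin, of m] Ccard by linarith
    qed
    finally show "card S \<le> 4" by simp
    fix u assume u: "u \<in> V" "{u,v} \<in> E" "S \<subseteq> ?N u"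
    show "?N v \<subseteq> ?N u"
    proof (rule ccontr)
      assume "\<not> ?N v \<subseteq> ?N u"
      then have "u \<in> C" using u by (auto simp: C_def S_def)
      then show False using u(3) mprop(2) by (auto simp: S_def)
    qed
  qed
qed

lemma nctd_noK33:
  assumes sg: "simple_graph V E"
    and NK: "\<And>x0 x1 x2 y0 y1 y2. distinct [x0,x1,x2,y0,y1,y2] \<Longrightarrow>
       {x0,y0} \<in> E \<Longrightarrow> {x0,y1} \<in> E \<Longrightarrow> {x0,y2} \<in> E \<Longrightarrow>
       {x1,y0} \<in> E \<Longrightarrow> {x1,y1} \<in> E \<Longrightarrow> {x1,y2} \<in> E \<Longrightarrow>
       {x2,y0} \<in> E \<Longrightarrow> {x2,y1} \<in> E \<Longrightarrow> {x2,y2} \<in> E \<Longrightarrow> False"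
  shows "NCTD V ((closed_nbhd V E) ` V) \<le> 5"
proof -
  let ?N = "closed_nbhd V E"
  define good where "good v S \<longleftrightarrow> S \<subseteq> V \<and> (\<forall>w\<in>S. {w,v} \<in> E) \<and> finite S \<and> card S \<le> 4 \<and>
             (\<forall>u\<in>V. {u,v} \<in> E \<longrightarrow> S \<subseteq> ?N u \<longrightarrow> ?N v \<subseteq> ?N u)" for v S
  have "\<exists>S. good v S" if "v \<in> V" for v
    unfolding good_def by (rule local_S[OF sg NK that])
  then have "\<forall>v\<in>V. \<exists>S. good v S" by blast
  from bchoice[OF this] obtain Sf where gd: "\<forall>v\<in>V. good v (Sf v)" by blast
  have SfV: "Sf v \<subseteq> V" if "v \<in> V" for v using gd that unfolding good_def by blast
  have SfE: "{w,v} \<in> E" if "v \<in> V" "w \<in> Sf v" for v w using gd that unfolding good_def by blast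
  have Sffin: "finite (Sf v)" if "v \<in> V" for v using gd that unfolding good_def by blast
  have Sfc: "card (Sf v) \<le> 4" if "v \<in> V" for v using gd that unfolding good_def by blast
  have Sfp: "?N v \<subseteq> ?N u" if "v \<in> V" "u \<in> V" "{u,v} \<in> E" "Sf v \<subseteq> ?N u" for v u
  proof -
    have "\<forall>u\<in>V. {u,v} \<in> E \<longrightarrow> Sf v \<subseteq> ?N u \<longrightarrow> ?N v \<subseteq> ?N u"
      using gd that(1) unfolding good_def by blast
    then show ?thesis using that by blast
  qed
  define rep where "rep B = (SOME r. r \<in> V \<and> ?N r = B)" for B
  have rep: "rep B \<in> V" "?N (rep B) = B" if "B \<in> ?N ` V" for B
  proof -
    have "\<exists>r. r \<in> V \<and> ?N r = B" using that by blast
    then have "rep B \<in> V \<and> ?N (rep B) = B" unfolding rep_def by (rule someI_ex)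
    then show "rep B \<in> V" "?N (rep B) = B" by auto
  qed
  define T where "T B = insert (rep B) (Sf (rep B))" for B
  have P5: "teaching_map V (?N ` V) T \<and> non_clashing (?N ` V) T \<and>
            (\<forall>B\<in>?N ` V. finite (T B) \<and> card (T B) \<le> 5)"
  proof (intro conjI)
    show "teaching_map V (?N ` V) T"
      unfolding teaching_map_def T_def using rep(1) SfV by blast
    show "\<forall>B\<in>?N ` V. finite (T B) \<and> card (T B) \<le> 5"
    proof
      fix B assume B: "B \<in> ?N ` V"
      have "finite (Sf (rep B))" "card (Sf (rep B)) \<le> 4" using Sffin[OF rep(1)[OF B]] Sfc[OF rep(1)[OF B]] by auto
      then show "finite (T B) \<and> card (T B) \<le> 5"
        unfolding T_def using card_insert_le_m1 by (simp add: card_insert_if)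
    qed
    show "non_clashing (?N ` V) T"
      unfolding non_clashing_def
    proof (intro ballI impI)
      fix B B' assume B: "B \<in> ?N ` V" and B': "B' \<in> ?N ` V" and ne: "B \<noteq> B'"
      define r where "r = rep B"
      define r' where "r' = rep B'"
      have r: "r \<in> V" "?N r = B" using rep[OF B] by (auto simp: r_def)
      have r': "r' \<in> V" "?N r' = B'" using rep[OF B'] by (auto simp: r'_def)
      have rr: "r \<noteq> r'" using r r' ne by auto
      show "\<exists>w\<in>T B \<union> T B'. distinguishes w B B'"
      proof (cases "{r, r'} \<in> E")
        case False
        have "r \<in> T B" by (simp add: T_def r_def)
        moreover have "r \<in> B" using r by (auto simp: nbhd_iff)
        moreover have "r \<notin> B'" using r' rr False by (auto simp: nbhd_iff)
        ultimately show ?thesis unfolding distinguishes_def by blast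
      next
        case True
        have "\<not> ?N r \<subseteq> ?N r' \<or> \<not> ?N r' \<subseteq> ?N r" using r r' ne by auto
        then show ?thesis
        proof
          assume h: "\<not> ?N r \<subseteq> ?N r'"
          have "{r', r} \<in> E" using True by (simp add: insert_commute)
          then have "\<not> Sf r \<subseteq> ?N r'" using Sfp[OF r(1) r'(1)] h by blast
          then obtain w where w: "w \<in> Sf r" "w \<notin> ?N r'" by blast
          have "w \<in> ?N r" using w SfE[OF r(1)] SfV[OF r(1)] by (auto simp: nbhd_iff)
          moreover have "w \<in> T B" using w by (simp add: T_def r_def)
          ultimately show ?thesis using w r r' unfolding distinguishes_def by blast
        next
          assume h: "\<not> ?N r' \<subseteq> ?N r"
          have "\<not> Sf r' \<subseteq> ?N r" using Sfp[OF r'(1) r(1)] True h by blast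
          then obtain w where w: "w \<in> Sf r'" "w \<notin> ?N r" by blast
          have "w \<in> ?N r'" using w SfE[OF r'(1)] SfV[OF r'(1)] by (auto simp: nbhd_iff)
          moreover have "w \<in> T B'" using w by (simp add: T_def r'_def)
          ultimately show ?thesis using w r r' unfolding distinguishes_def by blast
        qed
      qed
    qed
  qed
  show ?thesis
    unfolding NCTD_def by (rule Least_le) (use P5 in blast)
qed


lemma orient:
  assumes "arc g" "{pathstart g, pathfinish g} = {u, v}"
  shows "\<exists>h. arc h \<and> pathstart h = u \<and> pathfinish h = v \<and> path_image h = path_image g"
proof (cases "pathstart g = u")
  case True
  then have "pathfinish g = v" using assms(2) by (auto simp: doubleton_eq_iff)
  then show ?thesis using assms True by blast
next
  case False
  then have "pathstart g = v" "pathfinish g = u" using assms(2) by (auto simp: doubleton_eq_iff)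
  then show ?thesis using assms
    by (intro exI[of _ "reversepath g"]) (auto simp: arc_reversepath)
qed

lemma planar_NK:
  assumes pl: "planar_graph V E"
    and dist: "distinct [x0,x1,x2,y0,y1,y2]"
    and e: "{x0,y0} \<in> E" "{x0,y1} \<in> E" "{x0,y2} \<in> E"
       "{x1,y0} \<in> E" "{x1,y1} \<in> E" "{x1,y2} \<in> E"
       "{x2,y0} \<in> E" "{x2,y1} \<in> E" "{x2,y2} \<in> E"
  shows False
proof -
  have sg: "simple_graph V E" using pl by (simp add: planar_graph_def)
  obtain p :: "'a \<Rightarrow> complex" and \<gamma> :: "'a set \<Rightarrow> real \<Rightarrow> complex" where
    injp: "inj_on p V" and
    g1: "\<And>e. e \<in> E \<Longrightarrow> arc (\<gamma> e) \<and> {pathstart (\<gamma> e), pathfinish (\<gamma> e)} = p ` e"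
    and g2: "\<And>e e'. e \<in> E \<Longrightarrow> e' \<in> E \<Longrightarrow> e \<noteq> e' \<Longrightarrow> path_image (\<gamma> e) \<inter> path_image (\<gamma> e') \<subseteq> p ` (e \<inter> e')"
    using pl unfolding planar_graph_def by metis
  define X where "X i = (if i = 0 then x0 else if i = 1 then x1 else x2)" for i :: nat
  define Y where "Y i = (if i = 0 then y0 else if i = 1 then y1 else y2)" for i :: nat
  have c3: "n < 3 \<Longrightarrow> n = 0 \<or> n = 1 \<or> n = (2::nat)" for n by arith
  have XE: "{X i, Y j} \<in> E" if "i < 3" "j < 3" for i j
    using c3[OF that(1)] c3[OF that(2)] e by (elim disjE) (simp_all add: X_def Y_def)
  have Xinj: "X i = X k \<Longrightarrow> i = k" if "i < 3" "k < 3" for i k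
    using c3[OF that(1)] c3[OF that(2)] dist by (elim disjE) (simp_all add: X_def)
  have Yinj: "Y i = Y k \<Longrightarrow> i = k" if "i < 3" "k < 3" for i k
    using c3[OF that(1)] c3[OF that(2)] dist by (elim disjE) (simp_all add: Y_def)
  have XYne: "X i \<noteq> Y j" if "i < 3" "j < 3" for i j
    using c3[OF that(1)] c3[OF that(2)] dist by (elim disjE) (simp_all add: X_def Y_def)
  have XV: "X i \<in> V" "Y j \<in> V" if "i < 3" "j < 3" for i j
    using edgeD(2,3)[OF sg XE[OF that]] by auto
  define G where "G i j = (SOME h. arc h \<and> pathstart h = p (X i) \<and> pathfinish h = p (Y j) \<and>
     path_image h = path_image (\<gamma> {X i, Y j}))" for i j
  have Gp: "arc (G i j) \<and> pathstart (G i j) = p (X i) \<and> pathfinish (G i j) = p (Y j) \<and>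
     path_image (G i j) = path_image (\<gamma> {X i, Y j})" if "i < 3" "j < 3" for i j
  proof -
    have "\<exists>h. arc h \<and> pathstart h = p (X i) \<and> pathfinish h = p (Y j) \<and>
     path_image h = path_image (\<gamma> {X i, Y j})"
      using g1[OF XE[OF that]] by (intro orient) auto
    then show ?thesis unfolding G_def by (rule someI_ex)
  qed
  have "K33 (\<lambda>i. p (X i)) (\<lambda>j. p (Y j)) G"
    unfolding K33_def
  proof (intro conjI allI impI)
    fix i j assume ij: "i < (3::nat)" "j < (3::nat)"
    show "arc (G i j)" "pathstart (G i j) = p (X i)" "pathfinish (G i j) = p (Y j)"
      using Gp[OF ij] by auto
    show "p (X i) \<noteq> p (Y j)" using injp XV[OF ij] XYne[OF ij] by (metis inj_onD)
  next
    fix i k assume ik: "i < (3::nat)" "k < (3::nat)" "p (X i) = p (X k)"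
    then show "i = k" using injp XV(1)[OF ik(1) ik(1)] XV(1)[OF ik(2) ik(2)] Xinj[OF ik(1,2)] by (metis inj_onD)
  next
    fix i k assume ik: "i < (3::nat)" "k < (3::nat)" "p (Y i) = p (Y k)"
    then show "i = k" using injp XV(2)[OF ik(1) ik(1)] XV(2)[OF ik(2) ik(2)] Yinj[OF ik(1,2)] by (metis inj_onD)
  next
    fix i j k l assume ijkl: "i < (3::nat)" "j < (3::nat)" "k < (3::nat)" "l < (3::nat)" "(i,j) \<noteq> (k,l)"
    have neq: "{X i, Y j} \<noteq> {X k, Y l}"
    proof
      assume h: "{X i, Y j} = {X k, Y l}"
      then have "X i = X k \<or> X i = Y l" by blast
      then have "i = k" using Xinj[OF ijkl(1,3)] XYne[OF ijkl(1,4)] by blast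
      have "Y j = X k \<or> Y j = Y l" using h by blast
      then have "j = l" using Yinj[OF ijkl(2,4)] XYne[OF ijkl(3,2)] by metis
      then show False using \<open>i = k\<close> ijkl(5) by simp
    qed
    have "path_image (G i j) \<inter> path_image (G k l) \<subseteq> p ` ({X i, Y j} \<inter> {X k, Y l})"
      using g2[OF XE[OF ijkl(1,2)] XE[OF ijkl(3,4)] neq] Gp[OF ijkl(1,2)] Gp[OF ijkl(3,4)] by simp
    also have "\<dots> \<subseteq> (if i = k then {p (X i)} else {}) \<union> (if j = l then {p (Y j)} else {})"
    proof
      fix z assume "z \<in> p ` ({X i, Y j} \<inter> {X k, Y l})"
      then obtain y where y: "y \<in> {X i, Y j}" "y \<in> {X k, Y l}" "z = p y" by blast
      show "z \<in> (if i = k then {p (X i)} else {}) \<union> (if j = l then {p (Y j)} else {})"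
      proof (cases "y = X i")
        case True
        then have "X i = X k" using y XYne[OF ijkl(1,4)] by auto
        then have "i = k" using Xinj[OF ijkl(1,3)] by blast
        then show ?thesis using True y by simp
      next
        case False
        then have "y = Y j" using y by blast
        then have "Y j = Y l" using y XYne[OF ijkl(3,2)] by auto
        then have "j = l" using Yinj[OF ijkl(2,4)] by blast
        then show ?thesis using \<open>y = Y j\<close> y by simp
      qed
    qed
    finally show "path_image (G i j) \<inter> path_image (G k l) \<subseteq> (if i = k then {p (X i)} else {}) \<union> (if j = l then {p (Y j)} else {})" .
  qed
  then show False by (rule K33_false)
qed

theorem theorem7:
  fixes V :: "'a set" and E :: "'a set set"
  assumes "planar_graph V E"
  shows "NCTD V ((closed_nbhd V E) ` V) \<le> 5"
proof (rule nctd_noK33)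
  show "simple_graph V E" using assms by (simp add: planar_graph_def)
  fix x0 x1 x2 y0 y1 y2 :: 'a
  assume "distinct [x0,x1,x2,y0,y1,y2]"
     "{x0,y0} \<in> E" "{x0,y1} \<in> E" "{x0,y2} \<in> E"
     "{x1,y0} \<in> E" "{x1,y1} \<in> E" "{x1,y2} \<in> E"
     "{x2,y0} \<in> E" "{x2,y1} \<in> E" "{x2,y2} \<in> E"
  then show False by (rule planar_NK[OF assms])
qed

end
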